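(* Let $\epsilon>0$, $\ell>0$, $\beta\ge 0$, and for $\delta\in(0,1)$ let $$\Lambda:=\begin{bmatrix}-\epsilon(1-\delta) & \frac{\epsilon}{2}(\ell(1-\delta)+\delta\beta)\\ \frac{\epsilon}{2}(\ell(1-\delta)+\delta\beta) & -\frac12\delta\end{bmatrix}.$$ If $\epsilon<\frac{1}{2\ell\beta}$, then $\Lambda\prec 0$ for some $\delta^\star\in(0,1)$.
   Context: In the paper, $\ell$ is a constant with $\|\widetilde H^T(\nabla\Phi(x,u)-\nabla\Phi(x',u))\|\le\ell\|x-x'\|$ and $\beta=\|PH\|$ for a positive definite Lyapunov matrix $P$; for the statement only $\ell>0$ and $\beta\ge0$ matter. $\Lambda\prec 0$ means negative definite. *)

theory Defs
  imports "HOL-Analysis.Analysis"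
begin

definition neg_definite :: "real^'n^'n \<Rightarrow> bool" where
  "neg_definite M \<longleftrightarrow> (\<forall>x::real^'n. x \<noteq> 0 \<longrightarrow> x \<bullet> (M *v x) < 0)"

definition Lam :: "real \<Rightarrow> real \<Rightarrow> real \<Rightarrow> real \<Rightarrow> real^2^2" where
  "Lam \<epsilon> l \<beta> \<delta> =
     (let b = \<epsilon> / 2 * (l * (1 - \<delta>) + \<delta> * \<beta>) in
      vector [vector [- \<epsilon> * (1 - \<delta>), b], vector [b, - (1/2) * \<delta>]])"

end

theory Submission
  imports Defs
begin

lemma inner2: "(x::real^2) \<bullet> y = x$1 * y$1 + x$2 * y$2"
  by (simp add: inner_vec_def UNIV_2)

lemma mv2: "((vector [vector [a, b], vector [c, d]] :: real^2^2) *v x) $ 1 = a * x$1 + b * x$2"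
  "((vector [vector [a, b], vector [c, d]] :: real^2^2) *v x) $ 2 = c * x$1 + d * x$2"
  by (simp_all add: matrix_vector_mult_def sum_2)

lemma quad_neg:
  fixes a b d x y :: real
  assumes "a < 0" "a * d > b^2" "x \<noteq> 0 \<or> y \<noteq> 0"
  shows "a*x*x + 2*b*x*y + d*y*y < 0"
proof -
  have e: "a * (a*x*x + 2*b*x*y + d*y*y) = (a*x+b*y)^2 + (a*d-b^2)*y^2"
    by (simp add: algebra_simps power2_eq_square)
  have "(a*x+b*y)^2 + (a*d-b^2)*y^2 > 0"
  proof (cases "y = 0")
    case True then have "x \<noteq> 0" using assms by auto
    then show ?thesis using True assms by simp
  next
    case False then show ?thesis using assms
    proof -
      have "(a*d-b^2)*y^2 > 0" using False assms by simp
      moreover have "(a*x+b*y)^2 \<ge> 0" by simp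
      ultimately show ?thesis by linarith
    qed
  qed
  then have "a * (a*x*x + 2*b*x*y + d*y*y) > 0" using e by simp
  then show ?thesis using assms(1) by (simp add: zero_less_mult_iff)
qed

lemma nd2:
  fixes a b d :: real
  assumes "a < 0" "a * d > b^2"
  shows "neg_definite (vector [vector [a, b], vector [b, d]] :: real^2^2)"
  unfolding neg_definite_def
proof (intro allI impI)
  fix x :: "real^2" assume "x \<noteq> 0"
  then have "x$1 \<noteq> 0 \<or> x$2 \<noteq> 0"
    by (metis (full_types) exhaust_2 vec_eq_iff zero_index)
  then have "a*x$1*x$1 + 2*b*x$1*x$2 + d*x$2*x$2 < 0" using quad_neg assms by blast
  then show "x \<bullet> (vector [vector [a, b], vector [b, d]] *v x) < 0"
    by (simp add: inner2 mv2 algebra_simps)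
qed

theorem lemma2:
  fixes \<epsilon> l \<beta> :: real
  assumes "\<epsilon> > 0" and "l > 0" and "\<beta> \<ge> 0"
    and "2 * l * \<beta> * \<epsilon> < 1"
  shows "\<exists>\<delta>\<in>{0<..<1}. neg_definite (Lam \<epsilon> l \<beta> \<delta>)"
proof -
  obtain t where t: "t > 0" "\<epsilon> * (l + t*\<beta>)^2 < 2*t"
  proof (cases "\<beta> = 0")
    case True
    show ?thesis by (rule that[of "\<epsilon>*l^2"]) (use True assms in auto)
  next
    case False
    then have bp: "\<beta> > 0" using assms by auto
    define t where "t = (1-\<epsilon>*l*\<beta>)/(\<epsilon>*\<beta>^2)"
    have "\<epsilon>*l*\<beta> > 0" using assms bp by simp
    then have tp: "t > 0" unfolding t_def using assms bp by (auto intro!: divide_pos_pos simp: algebra_simps)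
    have et: "\<epsilon>*\<beta>^2*t = 1-\<epsilon>*l*\<beta>" unfolding t_def using assms bp by simp
    have "\<epsilon> * (l + t*\<beta>)^2 = \<epsilon>*l^2 + 2*\<epsilon>*l*\<beta>*t + (\<epsilon>*\<beta>^2*t)*t"
      by (simp add: algebra_simps power2_eq_square)
    also have "\<dots> = \<epsilon>*l^2 + (\<epsilon>*l*\<beta>)*t + t" unfolding et by (simp add: algebra_simps)
    finally have eq: "\<epsilon> * (l + t*\<beta>)^2 = \<epsilon>*l^2 + (\<epsilon>*l*\<beta>)*t + t" .
    have p: "\<epsilon>*l*\<beta> > 0" using assms bp by simp
    have "(\<epsilon>*l*\<beta>)^2 < (1-\<epsilon>*l*\<beta>)^2"
      using assms p by (intro power_strict_mono) (auto simp: algebra_simps)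
    moreover have "(\<epsilon>*l*\<beta>)^2 = \<epsilon>*\<beta>^2 * (\<epsilon>*l^2)" by (simp add: power2_eq_square)
    moreover have "(1-\<epsilon>*l*\<beta>)^2 = \<epsilon>*\<beta>^2 * ((1-\<epsilon>*l*\<beta>) * t)"
      by (simp only: power2_eq_square flip: et) (simp add: algebra_simps)
    ultimately have "\<epsilon>*\<beta>^2 * (\<epsilon>*l^2) < \<epsilon>*\<beta>^2 * ((1-\<epsilon>*l*\<beta>) * t)"
      by simp
    then have "\<epsilon>*l^2 < (1-\<epsilon>*l*\<beta>) * t" using assms bp
      by (simp add: mult_less_cancel_left_pos)
    then show ?thesis using eq tp by (intro that[of t]) (auto simp: algebra_simps)
  qed
  define \<delta> where "\<delta> = t/(1+t)"
  have d1: "1 - \<delta> = 1/(1+t)" unfolding \<delta>_def using t by (simp add: field_simps)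
  have "\<delta> \<in> {0<..<1}" unfolding \<delta>_def using t by auto
  moreover have "neg_definite (Lam \<epsilon> l \<beta> \<delta>)"
    unfolding Lam_def Let_def
  proof (rule nd2)
    show "- \<epsilon> * (1 - \<delta>) < 0" using d1 t assms by simp
    have b: "\<epsilon> / 2 * (l * (1 - \<delta>) + \<delta> * \<beta>) = \<epsilon>/2 * (l + t*\<beta>) / (1+t)"
    proof -
      have "l * (1 - \<delta>) + \<delta> * \<beta> = (l + t*\<beta>) / (1+t)"
        by (simp only: d1) (simp add: \<delta>_def add_divide_distrib)
      then show ?thesis by simp
    qed
    have "(\<epsilon>/2 * (l + t*\<beta>) / (1+t))^2 = \<epsilon> * (\<epsilon> * (l + t*\<beta>)^2) / (4*(1+t)^2)"
      using t by (simp add: power_divide power_mult_distrib power2_eq_square algebra_simps)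
    also have "\<dots> < \<epsilon> * (2*t) / (4*(1+t)^2)"
      using t assms by (intro divide_strict_right_mono mult_strict_left_mono) auto
    also have "\<dots> = - \<epsilon> * (1 - \<delta>) * (- (1 / 2) * \<delta>)"
    proof -
      have "1+t > 0" using t by simp
      have "- \<epsilon> * (1 - \<delta>) * (- (1 / 2) * \<delta>) = \<epsilon> * (1/(1+t)) * (t/(1+t)) / 2"
        by (simp only: d1) (simp add: \<delta>_def)
      also have "\<dots> = \<epsilon> * t / (2*((1+t)*(1+t)))" by simp
      also have "\<dots> = \<epsilon> * (2*t) / (4*(1+t)^2)" by (simp add: power2_eq_square)
      finally show ?thesis by simp
    qed
    finally show "(\<epsilon> / 2 * (l * (1 - \<delta>) + \<delta> * \<beta>))\<^sup>2 < - \<epsilon> * (1 - \<delta>) * (- (1 / 2) * \<delta>)"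
      unfolding b .
  qed
  ultimately show ?thesis by blast
qed

end
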